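(* Let $(w_K,x_K)_{K\ge1}\subseteq\{0,1\}^{\mathbb Z}\times\{0,1\}^{\mathbb Z}$ with $w_K\le x_K$, $(w_K)$ coordinatewise non-decreasing and $(x_K)$ coordinatewise non-increasing, and let $(w,x)=(w_\infty,x_\infty)$ be the coordinatewise limit. Suppose $(w_K,x_K)$ is good: there is an increasing sequence $(N_i)$ such that for every $K\in\mathbb N\cup\{\infty\}$, $(w_K,x_K)$ is quasi-generic along $(N_i)$ (for $\sigma\times\sigma$) for some measure $\rho_K$, and $\rho_K(\{(u,v):u_0=0,v_0=1\})\to\rho_\infty(\{(u,v):u_0=0,v_0=1\})$. If for each $K\ge1$ the subshift $\overline{[w_K,x_K]}$ is a sandwich measure-theoretically subordinate subshift with base measure $\rho_K$, then both $\bigcap_{K\ge1}\overline{[w_K,x_K]}$ and $\overline{[w,x]}$ are sandwich measure-theoretically subordinate subshifts with base measure $\rho_\infty=\lim_{K\to\infty}\rho_K$.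
   Context: $\sigma$ is the left shift on $\{0,1\}^{\mathbb Z}$; $\le$ is coordinatewise; $\mathcal M(Y)$ is the set of shift-invariant Borel probability measures on $Y$. A point $p$ is quasi-generic for $\mu$ along $(N_i)$ if $\frac1{N_i}\sum_{n\le N_i}\delta_{T^np}\to\mu$ weakly. For $w\le x$, $\overline{[w,x]}$ is the closure of $\{\sigma^ny:w\le y\le x,\ n\in\mathbb Z\}$. $N(w,x,y)=(1-y)w+yx$ coordinatewise, $\pi_{1,2}$ the projection to the first two coordinates. A subshift $X$ is a sandwich measure-theoretically subordinate subshift if there is $\rho\in\mathcal M((\{0,1\}^{\mathbb Z})^2,\sigma\times\sigma)$ with $\mathcal M(X)=\{N_*(\lambda):\lambda\in\mathcal M((\{0,1\}^{\mathbb Z})^3,\sigma^{\times3}),(\pi_{1,2})_*\lambda=\rho\}$; $\rho$ is a base measure if moreover $\rho(\{(u,v):u\le v\})=1$. *)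

theory Defs
  imports "HOL-Analysis.Analysis" "HOL-Probability.Probability"
begin

text \<open>Points of the full shift: elements of {0,1}^Z, rendered as int \<Rightarrow> bool
  (True = 1, False = 0), with the product topology (bool is discrete).\<close>

type_synonym pt = "int \<Rightarrow> bool"

definition shiftn :: "int \<Rightarrow> pt \<Rightarrow> pt" where
  "shiftn k y = (\<lambda>n. y (n + k))"

definition shift :: "pt \<Rightarrow> pt" where
  "shift = shiftn 1"

definition shift2 :: "pt \<times> pt \<Rightarrow> pt \<times> pt" where
  "shift2 = map_prod shift shift"

definition shift3 :: "pt \<times> pt \<times> pt \<Rightarrow> pt \<times> pt \<times> pt" where
  "shift3 = map_prod shift (map_prod shift shift)"

definition subshift :: "pt set \<Rightarrow> bool" where
  "subshift X \<longleftrightarrow> closed X \<and> shift ` X = X"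

definition inv_prob :: "('a::topological_space \<Rightarrow> 'a) \<Rightarrow> 'a measure \<Rightarrow> bool" where
  "inv_prob T \<mu> \<longleftrightarrow> sets \<mu> = sets borel \<and> prob_space \<mu> \<and> distr \<mu> borel T = \<mu>"

text \<open>M(Y): shift-invariant Borel probability measures on Y, viewed as measures
  on the full shift giving full mass to Y.\<close>
definition Minv :: "pt set \<Rightarrow> pt measure set" where
  "Minv Y = {\<mu>. inv_prob shift \<mu> \<and> emeasure \<mu> Y = 1}"

definition quasi_generic ::
  "('a::topological_space \<Rightarrow> 'a) \<Rightarrow> 'a \<Rightarrow> (nat \<Rightarrow> nat) \<Rightarrow> 'a measure \<Rightarrow> bool" where
  "quasi_generic T p Ns \<mu> \<longleftrightarrow> sets \<mu> = sets borel \<and> prob_space \<mu> \<and>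
     (\<forall>f :: 'a \<Rightarrow> real. continuous_on UNIV f \<and> bounded (range f) \<longrightarrow>
        (\<lambda>i. (\<Sum>n<Ns i. f ((T ^^ n) p)) / real (Ns i)) \<longlonglongrightarrow> integral\<^sup>L \<mu> f)"

definition sandwich :: "pt \<Rightarrow> pt \<Rightarrow> pt set" where
  "sandwich w x = closure {shiftn k y | k y. w \<le> y \<and> y \<le> x}"

text \<open>N(w,x,y) = (1-y)w + yx coordinatewise.\<close>
definition Nmap :: "pt \<times> pt \<times> pt \<Rightarrow> pt" where
  "Nmap t = (case t of (w, x, y) \<Rightarrow> (\<lambda>n. if y n then x n else w n))"

definition pi12 :: "pt \<times> pt \<times> pt \<Rightarrow> pt \<times> pt" where
  "pi12 t = (case t of (w, x, y) \<Rightarrow> (w, x))"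

definition smt_subshift :: "pt set \<Rightarrow> (pt \<times> pt) measure \<Rightarrow> bool" where
  "smt_subshift X \<rho> \<longleftrightarrow> subshift X \<and> inv_prob shift2 \<rho> \<and>
     Minv X = {distr lam borel Nmap | lam. inv_prob shift3 lam \<and> distr lam borel pi12 = \<rho>}"

definition smt_subshift_base :: "pt set \<Rightarrow> (pt \<times> pt) measure \<Rightarrow> bool" where
  "smt_subshift_base X \<rho> \<longleftrightarrow> smt_subshift X \<rho> \<and> emeasure \<rho> {(u, v). u \<le> v} = 1"

end

theory Submission
  imports Defs "HOL-Library.Diagonal_Subsequence"
begin

locale cyl =
  fixes agr :: "nat \<Rightarrow> 'a::topological_space \<Rightarrow> 'a \<Rightarrow> bool"
  assumes agr_refl: "agr n a a"
  and agr_sym: "agr n a b \<Longrightarrow> agr n b a"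
  and agr_trans: "agr n a b \<Longrightarrow> agr n b c \<Longrightarrow> agr n a c"
  and agr_mono: "m \<le> n \<Longrightarrow> agr n a b \<Longrightarrow> agr m a b"
  and agr_open: "open {b. agr n a b}"
  and agr_nbhd: "open U \<Longrightarrow> a \<in> U \<Longrightarrow> \<exists>n. {b. agr n a b} \<subseteq> U"
  and agr_fin: "finite ((\<lambda>a. {b. agr n a b}) ` UNIV)"
  and agr_cpt: "compact (UNIV :: 'a set)"
begin

definition det :: "nat \<Rightarrow> 'a set \<Rightarrow> bool" where
  "det n S \<longleftrightarrow> (\<forall>a b. agr n a b \<longrightarrow> (a \<in> S \<longleftrightarrow> b \<in> S))"

definition Alg :: "'a set set" where "Alg = {S. \<exists>n. det n S}"

lemma det_mono: "det m S \<Longrightarrow> m \<le> n \<Longrightarrow> det n S"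
  unfolding det_def using agr_mono by blast

lemma det_open: assumes "det n S" shows "open S"
proof -
  have "S = (\<Union>a\<in>S. {b. agr n a b})"
    using assms agr_refl unfolding det_def by blast
  moreover have "open (\<Union>a\<in>S. {b. agr n a b})" using agr_open by blast
  ultimately show ?thesis by simp
qed

lemma det_compl: "det n S \<Longrightarrow> det n (- S)"
  unfolding det_def by blast

lemma det_closed: "det n S \<Longrightarrow> closed S"
  using det_open[OF det_compl] by (simp add: closed_def)

lemma Alg_open: "S \<in> Alg \<Longrightarrow> open S" and Alg_closed: "S \<in> Alg \<Longrightarrow> closed S"
  unfolding Alg_def using det_open det_closed by auto

lemma Alg_Un: assumes "S \<in> Alg" "T \<in> Alg" shows "S \<union> T \<in> Alg"
proof -
  obtain m n where "det m S" "det n T" using assms unfolding Alg_def by auto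
  then have "det (max m n) S" "det (max m n) T" using det_mono by auto
  then have "det (max m n) (S \<union> T)" unfolding det_def by blast
  then show ?thesis unfolding Alg_def by auto
qed

lemma Alg_Int: assumes "S \<in> Alg" "T \<in> Alg" shows "S \<inter> T \<in> Alg"
proof -
  obtain m n where "det m S" "det n T" using assms unfolding Alg_def by auto
  then have "det (max m n) S" "det (max m n) T" using det_mono by auto
  then have "det (max m n) (S \<inter> T)" unfolding det_def by blast
  then show ?thesis unfolding Alg_def by auto
qed

lemma Alg_compl: "S \<in> Alg \<Longrightarrow> - S \<in> Alg"
  unfolding Alg_def using det_compl by auto

lemma Alg_UNIV: "UNIV \<in> Alg" and Alg_empty: "{} \<in> Alg"
  unfolding Alg_def det_def by auto

lemma Alg_algebra: "algebra UNIV Alg"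
  unfolding algebra_iff_Un using Alg_empty Alg_Un Alg_compl
  by (auto simp: Compl_eq_Diff_UNIV[symmetric])

lemma Alg_Int_stable: "Int_stable Alg"
  unfolding Int_stable_def using Alg_Int by auto

lemma det_finite: "finite {S. det n S}"
proof -
  define C where "C = (\<lambda>a. {b. agr n a b}) ` UNIV"
  have "{S. det n S} \<subseteq> Union ` Pow C"
  proof
    fix S assume "S \<in> {S. det n S}"
    then have d: "det n S" by simp
    have "S = \<Union>{c \<in> C. c \<subseteq> S}"
    proof
      show "S \<subseteq> \<Union>{c \<in> C. c \<subseteq> S}"
      proof
        fix a assume "a \<in> S"
        then have "{b. agr n a b} \<subseteq> S" using d unfolding det_def by blast
        then show "a \<in> \<Union>{c \<in> C. c \<subseteq> S}" using agr_refl[of n a] unfolding C_def by blast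
      qed
    qed auto
    then show "S \<in> Union ` Pow C" by blast
  qed
  moreover have "finite (Union ` Pow C)" using agr_fin unfolding C_def by simp
  ultimately show ?thesis using finite_subset by blast
qed

lemma Alg_countable: "countable Alg"
proof -
  have "Alg = (\<Union>n. {S. det n S})" unfolding Alg_def by auto
  then show ?thesis using det_finite by (simp add: countable_finite)
qed

lemma open_sigma: assumes "open U" shows "U \<in> sigma_sets UNIV Alg"
proof -
  define V where "V n = {a. {b. agr n a b} \<subseteq> U}" for n
  have "det n (V n)" for n
    unfolding det_def V_def using agr_sym agr_trans by blast
  then have "V n \<in> sigma_sets UNIV Alg" for n unfolding Alg_def by auto
  then have "(\<Union>n. V n) \<in> sigma_sets UNIV Alg" by (rule sigma_sets.Union)
  moreover have "(\<Union>n. V n) = U"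
  proof
    show "(\<Union>n. V n) \<subseteq> U" unfolding V_def using agr_refl by blast
    show "U \<subseteq> (\<Union>n. V n)" unfolding V_def using agr_nbhd[OF assms] by blast
  qed
  ultimately show ?thesis by simp
qed

lemma sets_borel_Alg: "sets borel = sigma_sets UNIV Alg"
  unfolding sets_borel
proof (rule sigma_sets_eqI)
  show "a \<in> sigma_sets UNIV Alg" if "a \<in> {S. open S}" for a using open_sigma that by auto
  show "b \<in> sigma_sets UNIV {S. open S}" if "b \<in> Alg" for b
    using Alg_open[OF that] by auto
qed

lemma Alg_borel: "S \<in> Alg \<Longrightarrow> S \<in> sets borel"
  using Alg_open by auto

lemma measure_unique:
  assumes "sets M = sets borel" "sets N = sets borel" "finite_measure M"
    and "\<And>S. S \<in> Alg \<Longrightarrow> emeasure M S = emeasure N S"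
  shows "M = N"
proof (rule measure_eqI_generator_eq[OF Alg_Int_stable, of UNIV, where A="\<lambda>_. UNIV"])
  show "Alg \<subseteq> Pow UNIV" by simp
  show "sets M = sigma_sets UNIV Alg" "sets N = sigma_sets UNIV Alg"
    using assms sets_borel_Alg by auto
  show "range (\<lambda>_. UNIV) \<subseteq> Alg" using Alg_UNIV by auto
  have "space M = UNIV" using assms(1) sets_eq_imp_space_eq by fastforce
  then show "emeasure M UNIV \<noteq> \<infinity>" for i::nat
    using finite_measure.emeasure_finite[OF assms(3), of UNIV] by simp
qed (use assms in auto)

lemma ind_cont: assumes "S \<in> Alg" shows "continuous_on UNIV (indicator S :: 'a \<Rightarrow> real)"
  unfolding continuous_on_open_invariant
proof (intro allI impI)
  fix B :: "real set" assume "open B"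
  have "indicator S -` B = (if (1::real) \<in> B then S else {}) \<union> (if (0::real) \<in> B then - S else {})"
    by (auto simp: indicator_def of_bool_def split: if_splits)
  moreover have "open S" "open (- S)" using Alg_open Alg_compl assms by auto
  ultimately have "open (indicator S -` B :: 'a set)" by auto
  then show "\<exists>A. open A \<and> A \<inter> UNIV = (indicator S :: 'a \<Rightarrow> real) -` B \<inter> UNIV" by auto
qed

end


lemma diag_conv:
  fixes x :: "nat \<Rightarrow> nat \<Rightarrow> real"
  assumes bnd: "\<And>m K. \<bar>x m K\<bar> \<le> B"
  shows "\<exists>r. strict_mono r \<and> (\<forall>m. convergent (\<lambda>K. x m (r K)))"
proof -
  define P where "P m s \<longleftrightarrow> convergent (\<lambda>K. x m (s K))" for m and s :: "nat \<Rightarrow> nat"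
  interpret subseqs P
  proof
    fix m and s :: "nat \<Rightarrow> nat" assume "strict_mono s"
    obtain f where f: "strict_mono f" "monoseq (\<lambda>n. x m (s (f n)))"
      using seq_monosub[of "\<lambda>n. x m (s n)"] by blast
    have "Bseq (\<lambda>n. x m (s (f n)))" using bnd by (intro BseqI'[of _ B]) auto
    then have "convergent (\<lambda>n. x m (s (f n)))" using f Bseq_monoseq_convergent by blast
    then show "\<exists>r'. strict_mono r' \<and> P m (s \<circ> r')" using f unfolding P_def by (auto simp: o_def)
  qed
  have "P m (diagseq \<circ> (+) (Suc m))" for m
  proof (rule diagseq_holds)
    fix r s n assume "strict_mono (r::nat\<Rightarrow>nat)" "P n s"
    then show "P n (s \<circ> r)" unfolding P_def
      using convergent_subseq_convergent[of "\<lambda>K. x n (s K)" r] by (simp add: o_def)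
  qed
  moreover have "diagseq \<circ> (+) (Suc m) = (\<lambda>K. diagseq (K + Suc m))" for m
    by (rule ext) (metis add.commute comp_apply)
  ultimately have "convergent (\<lambda>K. x m (diagseq (K + Suc m)))" for m
    unfolding P_def by metis
  then have "convergent (\<lambda>K. x m (diagseq K))" for m
    using convergent_ignore_initial_segment[of "\<lambda>K. x m (diagseq K)" "Suc m"] by simp
  then show ?thesis using subseq_diagseq by blast
qed

context cyl begin

theorem subseq_limit:
  fixes L :: "nat \<Rightarrow> 'a measure"
  assumes L: "\<And>K. prob_space (L K)" "\<And>K. sets (L K) = sets borel"
  shows "\<exists>r M. strict_mono r \<and> prob_space M \<and> sets M = sets borel \<and>
           (\<forall>S\<in>Alg. (\<lambda>K. measure (L (r K)) S) \<longlonglongrightarrow> measure M S)"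
proof -
  have spL: "space (L K) = UNIV" for K using L(2) sets_eq_imp_space_eq by fastforce
  define e where "e = from_nat_into Alg"
  have "\<bar>measure (L K) (e m)\<bar> \<le> 1" for m K
    using prob_space.prob_le_1[OF L(1)] by simp
  then obtain r where r: "strict_mono r" and conv0: "\<And>m. convergent (\<lambda>K. measure (L (r K)) (e m))"
    using diag_conv[of "\<lambda>m K. measure (L K) (e m)" 1] by blast
  have conv: "convergent (\<lambda>K. measure (L (r K)) S)" if SA: "S \<in> Alg" for S
  proof -
    obtain m where "from_nat_into Alg m = S" using from_nat_into_surj[OF Alg_countable SA] by blast
    then show ?thesis using conv0[of m] unfolding e_def by simp
  qed
  define lf where "lf S = lim (\<lambda>K. measure (L (r K)) S)" for S
  have lim: "(\<lambda>K. measure (L (r K)) S) \<longlonglongrightarrow> lf S" if "S \<in> Alg" for S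
    using conv[OF that] unfolding lf_def convergent_LIMSEQ_iff .
  have lf_nn: "0 \<le> lf S" if "S \<in> Alg" for S
    using lim[OF that] by (rule LIMSEQ_le_const) simp
  have lf_univ: "lf UNIV = 1"
  proof -
    have "(\<lambda>K. measure (L (r K)) UNIV) = (\<lambda>K. 1)"
      using prob_space.prob_space[OF L(1)] spL by simp
    then have "(\<lambda>K. measure (L (r K)) UNIV) \<longlonglongrightarrow> 1" by simp
    then show ?thesis using LIMSEQ_unique[OF lim[OF Alg_UNIV]] by blast
  qed
  have lf_empty: "lf {} = 0"
  proof -
    have "(\<lambda>K. measure (L (r K)) {}) \<longlonglongrightarrow> 0" by simp
    then show ?thesis using LIMSEQ_unique[OF lim[OF Alg_empty]] by blast
  qed
  have lf_add: "lf (S \<union> T) = lf S + lf T" if "S \<in> Alg" "T \<in> Alg" "S \<inter> T = {}" for S T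
  proof -
    have "measure (L (r K)) (S \<union> T) = measure (L (r K)) S + measure (L (r K)) T" for K
    proof (rule measure_Union)
      have fm: "finite_measure (L (r K))" using L(1) prob_space.finite_measure by blast
      show "emeasure (L (r K)) S \<noteq> \<infinity>" "emeasure (L (r K)) T \<noteq> \<infinity>"
        using finite_measure.emeasure_finite[OF fm] by simp_all
      show "S \<in> sets (L (r K))" "T \<in> sets (L (r K))" using that(1,2) Alg_borel L(2) by simp_all
      show "S \<inter> T = {}" by fact
    qed
    then have "(\<lambda>K. measure (L (r K)) (S \<union> T)) \<longlonglongrightarrow> lf S + lf T"
      using tendsto_add[OF lim[OF that(1)] lim[OF that(2)]] by simp
    then show ?thesis using lim[OF Alg_Un[OF that(1,2)]] LIMSEQ_unique by blast
  qed
  define f where "f S = ennreal (lf S)" for S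
  interpret algebra UNIV Alg by (rule Alg_algebra)
  have "\<exists>\<mu> :: 'a set \<Rightarrow> ennreal. (\<forall>s \<in> Alg. \<mu> s = f s) \<and> measure_space UNIV (sigma_sets UNIV Alg) \<mu>"
  proof (rule caratheodory_empty_continuous)
    show "positive Alg f" unfolding positive_def f_def using lf_empty by simp
    show "additive Alg f" unfolding additive_def f_def
    proof (intro ballI impI)
      fix x y assume "x \<in> Alg" "y \<in> Alg" "x \<inter> y = {}"
      then show "ennreal (lf (x \<union> y)) = ennreal (lf x) + ennreal (lf y)"
        using lf_add[of x y] lf_nn[of x] lf_nn[of y] by (simp add: ennreal_plus)
    qed
    show "f A \<noteq> \<infinity>" for A unfolding f_def by simp
  next
    fix A :: "nat \<Rightarrow> 'a set" assume A: "range A \<subseteq> Alg" "decseq A" "(\<Inter>i. A i) = {}"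
    have cov: "UNIV \<subseteq> (\<Union>i\<in>UNIV. - A i)" using A(3) by blast
    have opn: "open (- A i)" for i
    proof -
      have "A i \<in> Alg" using A(1) by blast
      then have "closed (A i)" by (rule Alg_closed)
      then show ?thesis by (rule open_Compl)
    qed
    obtain I where I: "finite I" "UNIV \<subseteq> (\<Union>i\<in>I. - A i)"
    proof (rule compactE_image[OF agr_cpt, of UNIV "\<lambda>i. - A i"])
      show "\<And>T. T \<in> UNIV \<Longrightarrow> open (- A T)" by (rule opn)
      show "UNIV \<subseteq> (\<Union>i\<in>UNIV. - A i)" by (rule cov)
    qed
    obtain n where n: "\<forall>i\<in>I. i \<le> n" using I(1) finite_nat_set_iff_bounded_le by blast
    have "A n = {}"
    proof -
      have "- A i \<subseteq> - A n" if "i \<in> I" for i using A(2) n that by (auto simp: decseq_def)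
      then show ?thesis using I(2) by blast
    qed
    then have "A j = {}" if "j \<ge> n" for j using A(2) that by (auto simp: decseq_def)
    then have "eventually (\<lambda>j. f (A j) = 0) sequentially"
      unfolding eventually_sequentially f_def
    proof (intro exI[of _ n] allI impI)
      fix j assume "n \<le> j"
      then have "A j = {}" using \<open>\<And>j. n \<le> j \<Longrightarrow> A j = {}\<close> by blast
      then show "ennreal (lf (A j)) = 0" using lf_empty by simp
    qed
    then show "(\<lambda>i. f (A i)) \<longlonglongrightarrow> 0" by (simp add: tendsto_eventually)
  qed
  then obtain \<mu> where mu: "\<And>s. s \<in> Alg \<Longrightarrow> \<mu> s = f s" "measure_space UNIV (sigma_sets UNIV Alg) \<mu>"
    by blast
  define M where "M = measure_of UNIV (sigma_sets UNIV Alg) \<mu>"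
  have sM: "sets M = sets borel"
    unfolding M_def sets_borel_Alg by (simp add: sigma_sets_sigma_sets_eq)
  have eM: "emeasure M S = f S" if "S \<in> Alg" for S
  proof -
    have "S \<in> sigma_sets UNIV Alg" using that by auto
    then have "emeasure M S = \<mu> S" unfolding M_def
      using mu(2) by (intro emeasure_measure_of_sigma) (auto simp: measure_space_def)
    then show ?thesis using mu(1) that by simp
  qed
  have spM: "space M = UNIV" using sM sets_eq_imp_space_eq by fastforce
  have pM: "prob_space M"
    by (rule prob_spaceI) (simp add: spM eM[OF Alg_UNIV] f_def lf_univ)
  have "measure M S = lf S" if "S \<in> Alg" for S
    using eM[OF that] lf_nn[OF that] unfolding measure_def f_def by simp
  then have "\<forall>S\<in>Alg. (\<lambda>K. measure (L (r K)) S) \<longlonglongrightarrow> measure M S" using lim by simp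
  then show ?thesis using r pM sM by blast
qed

end


lemma cyl_prod:
  assumes "cyl A" "cyl B"
  shows "cyl (\<lambda>n p q. A n (fst p) (fst q) \<and> B n (snd p) (snd q))"
proof -
  interpret a: cyl A by fact
  interpret b: cyl B by fact
  show ?thesis
  proof
    fix n p q r
    show "A n (fst p) (fst p) \<and> B n (snd p) (snd p)" using a.agr_refl b.agr_refl by blast
    show "A n (fst p) (fst q) \<and> B n (snd p) (snd q) \<Longrightarrow> A n (fst q) (fst p) \<and> B n (snd q) (snd p)"
      using a.agr_sym b.agr_sym by blast
    show "A n (fst p) (fst q) \<and> B n (snd p) (snd q) \<Longrightarrow> A n (fst q) (fst r) \<and> B n (snd q) (snd r) \<Longrightarrow>
          A n (fst p) (fst r) \<and> B n (snd p) (snd r)"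
      using a.agr_trans b.agr_trans by blast
  next
    fix m n p q
    show "m \<le> n \<Longrightarrow> A n (fst p) (fst q) \<and> B n (snd p) (snd q) \<Longrightarrow> A m (fst p) (fst q) \<and> B m (snd p) (snd q)"
      using a.agr_mono b.agr_mono by blast
  next
    fix n p
    have "{q. A n (fst p) (fst q) \<and> B n (snd p) (snd q)} = {b. A n (fst p) b} \<times> {b. B n (snd p) b}"
      by auto
    then show "open {q. A n (fst p) (fst q) \<and> B n (snd p) (snd q)}"
      using a.agr_open b.agr_open by (simp add: open_Times)
  next
    fix U and p :: "'a \<times> 'b" assume "open U" "p \<in> U"
    then obtain S T where ST: "open S" "open T" "p \<in> S \<times> T" "S \<times> T \<subseteq> U"
      by (rule open_prod_elim)
    have fs: "fst p \<in> S" "snd p \<in> T" using ST(3) by (auto simp: mem_Times_iff)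
    obtain n1 where n1: "{b. A n1 (fst p) b} \<subseteq> S" using a.agr_nbhd[OF ST(1) fs(1)] by blast
    obtain n2 where n2: "{b. B n2 (snd p) b} \<subseteq> T" using b.agr_nbhd[OF ST(2) fs(2)] by blast
    have "{q. A (max n1 n2) (fst p) (fst q) \<and> B (max n1 n2) (snd p) (snd q)} \<subseteq> U"
    proof
      fix q assume "q \<in> {q. A (max n1 n2) (fst p) (fst q) \<and> B (max n1 n2) (snd p) (snd q)}"
      then have "A n1 (fst p) (fst q)" "B n2 (snd p) (snd q)" using a.agr_mono b.agr_mono
        by (metis (no_types, lifting) max.cobounded1 max.cobounded2 mem_Collect_eq)+
      then have "q \<in> S \<times> T" using n1 n2 by (cases q) auto
      then show "q \<in> U" using ST(4) by blast
    qed
    then show "\<exists>n. {q. A n (fst p) (fst q) \<and> B n (snd p) (snd q)} \<subseteq> U" by blast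
  next
    fix n
    have "(\<lambda>p. {q. A n (fst p) (fst q) \<and> B n (snd p) (snd q)}) ` UNIV \<subseteq>
          (\<lambda>(X, Y). X \<times> Y) ` (((\<lambda>a. {b. A n a b}) ` UNIV) \<times> ((\<lambda>a. {b. B n a b}) ` UNIV))"
    proof
      fix Z assume "Z \<in> (\<lambda>p. {q. A n (fst p) (fst q) \<and> B n (snd p) (snd q)}) ` UNIV"
      then obtain p where "Z = {q. A n (fst p) (fst q) \<and> B n (snd p) (snd q)}" by blast
      then have "Z = {b. A n (fst p) b} \<times> {b. B n (snd p) b}" by auto
      then show "Z \<in> (\<lambda>(X, Y). X \<times> Y) ` (((\<lambda>a. {b. A n a b}) ` UNIV) \<times> ((\<lambda>a. {b. B n a b}) ` UNIV))"
        by blast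
    qed
    moreover have "finite ((\<lambda>(X, Y). X \<times> Y) ` (((\<lambda>a. {b. A n a b}) ` UNIV) \<times> ((\<lambda>a. {b. B n a b}) ` UNIV)))"
      by (intro finite_imageI finite_cartesian_product a.agr_fin b.agr_fin)
    ultimately show "finite ((\<lambda>p. {q. A n (fst p) (fst q) \<and> B n (snd p) (snd q)}) ` UNIV)"
      by (rule finite_subset)
  next
    have "compact (UNIV \<times> UNIV :: ('a \<times> 'b) set)" using a.agr_cpt b.agr_cpt by (rule compact_Times)
    then show "compact (UNIV :: ('a \<times> 'b) set)" by simp
  qed
qed

definition agr1 :: "nat \<Rightarrow> pt \<Rightarrow> pt \<Rightarrow> bool" where
  "agr1 n a b \<longleftrightarrow> (\<forall>j. \<bar>j\<bar> \<le> int n \<longrightarrow> a j = b j)"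

lemma compact_pt: "compact (UNIV :: pt set)"
proof -
  have "compact_space (product_topology (\<lambda>i::int. (euclidean :: bool topology)) UNIV)"
    unfolding compact_space_product_topology
    by (auto simp: compact_space_def compactin_euclidean_iff intro: finite_imp_compact)
  thus ?thesis unfolding euclidean_product_topology
    by (simp add: compact_space_def compactin_euclidean_iff)
qed

lemma finite_window: "finite {j::int. \<bar>j\<bar> \<le> int n}"
  by (rule finite_subset[of _ "{- int n..int n}"]) auto

lemma open_bool: "open (S :: bool set)"
  by (rule discrete_topology_class.open_discrete)

lemma finite_int_bound: "finite (F :: int set) \<Longrightarrow> \<exists>n::nat. \<forall>i\<in>F. \<bar>i\<bar> \<le> int n"
proof (induction rule: finite_induct)
  case empty then show ?case by simp
next
  case (insert x F)
  then obtain n where "\<forall>i\<in>F. \<bar>i\<bar> \<le> int n" by blast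
  then show ?case by (intro exI[of _ "max n (nat \<bar>x\<bar>)"]) auto
qed

interpretation C1: cyl agr1
proof
  fix n a b c
  show "agr1 n a a" unfolding agr1_def by simp
  show "agr1 n a b \<Longrightarrow> agr1 n b a" unfolding agr1_def by simp
  show "agr1 n a b \<Longrightarrow> agr1 n b c \<Longrightarrow> agr1 n a c" unfolding agr1_def by simp
next
  fix m n a b show "m \<le> n \<Longrightarrow> agr1 n a b \<Longrightarrow> agr1 m a b" unfolding agr1_def by force
next
  fix n and a :: pt
  have "open {f. \<forall>i\<in>{j. \<bar>j\<bar> \<le> int n}. f (id i) \<in> {a i}}"
    by (rule product_topology_basis') (auto simp: finite_window open_bool)
  moreover have "{f. \<forall>i\<in>{j. \<bar>j\<bar> \<le> int n}. f (id i) \<in> {a i}} = {b. agr1 n a b}"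
    unfolding agr1_def by auto
  ultimately show "open {b. agr1 n a b}" by simp
next
  fix U and a :: pt assume oU: "open U" and aU: "a \<in> U"
  have oU': "openin (product_topology (\<lambda>i. euclidean) UNIV) U" using oU unfolding open_fun_def .
  obtain X where X: "a \<in> (\<Pi>\<^sub>E i\<in>UNIV. X i)" "\<And>i. openin euclidean (X i)"
     "finite {i. X i \<noteq> topspace euclidean}" "(\<Pi>\<^sub>E i\<in>UNIV. X i) \<subseteq> U"
    using product_topology_open_contains_basis[OF oU' aU] by blast
  obtain n where n: "\<forall>i\<in>{i. X i \<noteq> UNIV}. \<bar>i\<bar> \<le> int n" using finite_int_bound[OF X(3)] by auto
  have "{b. agr1 n a b} \<subseteq> (\<Pi>\<^sub>E i\<in>UNIV. X i)"
  proof
    fix b assume b: "b \<in> {b. agr1 n a b}"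
    have "b i \<in> X i" for i
    proof (cases "X i = UNIV")
      case False
      then have "b i = a i" using n b unfolding agr1_def by auto
      then show ?thesis using X(1) by auto
    qed simp
    then show "b \<in> (\<Pi>\<^sub>E i\<in>UNIV. X i)" by auto
  qed
  then show "\<exists>n. {b. agr1 n a b} \<subseteq> U" using X(4) by blast
next
  fix n
  define W where "W = {j::int. \<bar>j\<bar> \<le> int n}"
  have fW: "finite W" unfolding W_def by (rule finite_window)
  have "(\<lambda>a. {b. agr1 n a b}) ` UNIV \<subseteq> (\<lambda>h. {b. \<forall>j\<in>W. b j = h j}) ` (PiE W (\<lambda>_. UNIV))"
  proof
    fix Z assume "Z \<in> (\<lambda>a. {b. agr1 n a b}) ` UNIV"
    then obtain a where "Z = {b. agr1 n a b}" by blast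
    then have "Z = {b. \<forall>j\<in>W. b j = restrict a W j}" unfolding agr1_def W_def by auto
    moreover have "restrict a W \<in> PiE W (\<lambda>_. UNIV)" by simp
    ultimately show "Z \<in> (\<lambda>h. {b. \<forall>j\<in>W. b j = h j}) ` (PiE W (\<lambda>_. UNIV))" by blast
  qed
  moreover have "finite (PiE W (\<lambda>_. UNIV :: bool set))" using fW by (simp add: finite_PiE)
  ultimately show "finite ((\<lambda>a. {b. agr1 n a b}) ` UNIV)" using finite_subset by blast
next
  show "compact (UNIV :: pt set)" by (rule compact_pt)
qed

definition agr2 :: "nat \<Rightarrow> pt \<times> pt \<Rightarrow> pt \<times> pt \<Rightarrow> bool" where
  "agr2 n p q \<longleftrightarrow> agr1 n (fst p) (fst q) \<and> agr1 n (snd p) (snd q)"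

interpretation C2: cyl agr2
proof -
  have "agr2 = (\<lambda>n p q. agr1 n (fst p) (fst q) \<and> agr1 n (snd p) (snd q))"
    by (intro ext) (simp add: agr2_def)
  then show "cyl agr2" using cyl_prod[OF C1.cyl_axioms C1.cyl_axioms] by simp
qed

definition agr3 :: "nat \<Rightarrow> pt \<times> pt \<times> pt \<Rightarrow> pt \<times> pt \<times> pt \<Rightarrow> bool" where
  "agr3 n p q \<longleftrightarrow> agr1 n (fst p) (fst q) \<and> agr2 n (snd p) (snd q)"

interpretation C3: cyl agr3
proof -
  have "agr3 = (\<lambda>n p q. agr1 n (fst p) (fst q) \<and> agr2 n (snd p) (snd q))"
    by (intro ext) (simp add: agr3_def)
  then show "cyl agr3" using cyl_prod[OF C1.cyl_axioms C2.cyl_axioms] by simp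
qed



lemma Alg_vimage:
  assumes "cyl A" "cyl B" and ag: "\<forall>n x y. B (n + c) x y \<longrightarrow> A n (f x) (f y)"
    and S: "S \<in> cyl.Alg A"
  shows "f -` S \<in> cyl.Alg B"
proof -
  interpret a: cyl A by fact
  interpret b: cyl B by fact
  from S obtain n where "a.det n S" unfolding a.Alg_def by auto
  then have "b.det (n + c) (f -` S)" unfolding a.det_def b.det_def using ag by blast
  then show ?thesis unfolding b.Alg_def by blast
qed

lemma (in cyl) measurable_Alg:
  assumes "\<And>S. S \<in> Alg \<Longrightarrow> f -` S \<inter> space M \<in> sets M"
  shows "f \<in> measurable M borel"
proof -
  have "f \<in> measurable M (measure_of UNIV Alg (\<lambda>_. 0))"
    by (rule measurable_measure_of) (use assms in auto)
  moreover have "sets (measure_of UNIV Alg (\<lambda>_. 0)) = sets borel"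
    using sets_borel_Alg by simp
  ultimately show ?thesis using measurable_cong_sets[of M M "measure_of UNIV Alg (\<lambda>_. 0)" borel] by simp
qed

lemma meas_from_agr:
  fixes f :: "'b::topological_space \<Rightarrow> 'a::topological_space"
  assumes "cyl A" "cyl B" and ag: "\<forall>n x y. B (n + c) x y \<longrightarrow> A n (f x) (f y)"
  shows "f \<in> measurable (borel :: 'b measure) (borel :: 'a measure)"
proof -
  interpret a: cyl A by fact
  interpret b: cyl B by fact
  show ?thesis
  proof (rule a.measurable_Alg)
    fix S assume "S \<in> a.Alg"
    then have "f -` S \<in> b.Alg" by (rule Alg_vimage[OF assms(1,2) ag])
    then show "f -` S \<inter> space borel \<in> sets borel" using b.Alg_borel by simp
  qed
qed

lemma shiftn_apply: "shiftn k y n = y (n + k)"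
  by (simp add: shiftn_def)

lemma shiftn_shiftn: "shiftn j (shiftn k y) = shiftn (k + j) y"
  by (simp add: shiftn_def ac_simps)

lemma shiftn_0: "shiftn 0 y = y"
  by (simp add: shiftn_def)

lemma shift_pow: "(shift ^^ k) y = shiftn (int k) y"
  by (induction k) (simp_all add: shiftn_0 shift_def shiftn_shiftn add.commute)

lemma shift2_pow: "(shift2 ^^ k) p = (shiftn (int k) (fst p), shiftn (int k) (snd p))"
proof (induction k)
  case 0 then show ?case by (simp add: shiftn_0)
next
  case (Suc k) then show ?case
    by (simp add: shift2_def shift_def shiftn_shiftn add.commute)
qed

lemma agr_shiftn1:
  assumes "agr1 (n + nat \<bar>k\<bar>) x y" shows "agr1 n (shiftn k x) (shiftn k y)"
  using assms unfolding agr1_def shiftn_def by force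

lemma agr_shift1: "\<forall>n x y. agr1 (n + 1) x y \<longrightarrow> agr1 n (shift x) (shift y)"
  using agr_shiftn1[of _ 1] by (simp add: shift_def)

lemma agr_shift2: "\<forall>n x y. agr2 (n + 1) x y \<longrightarrow> agr2 n (shift2 x) (shift2 y)"
proof (intro allI impI)
  fix n x y assume "agr2 (n + 1) x y"
  then show "agr2 n (shift2 x) (shift2 y)"
    using agr_shift1 by (cases x, cases y) (simp add: agr2_def shift2_def)
qed

lemma agr_shift3: "\<forall>n x y. agr3 (n + 1) x y \<longrightarrow> agr3 n (shift3 x) (shift3 y)"
proof (intro allI impI)
  fix n x y assume "agr3 (n + 1) x y"
  then show "agr3 n (shift3 x) (shift3 y)"
    using agr_shift1 by (cases x, cases y) (auto simp: agr3_def agr2_def shift3_def)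
qed

lemma agr_pi12: "\<forall>n x y. agr3 (n + 0) x y \<longrightarrow> agr2 n (pi12 x) (pi12 y)"
proof (intro allI impI)
  fix n x y assume "agr3 (n + 0) x y"
  then show "agr2 n (pi12 x) (pi12 y)"
    by (cases x, cases y) (auto simp: agr3_def agr2_def pi12_def)
qed

lemma agr_Nmap: "\<forall>n x y. agr3 (n + 0) x y \<longrightarrow> agr1 n (Nmap x) (Nmap y)"
proof (intro allI impI)
  fix n x y assume "agr3 (n + 0) x y"
  then show "agr1 n (Nmap x) (Nmap y)"
    by (cases x, cases y) (auto simp: agr3_def agr2_def agr1_def Nmap_def)
qed

lemma meas_shift: "shift \<in> borel_measurable borel"
  by (rule meas_from_agr[OF C1.cyl_axioms C1.cyl_axioms, where f=shift, OF agr_shift1])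
lemma meas_shift2: "shift2 \<in> borel_measurable borel"
  by (rule meas_from_agr[OF C2.cyl_axioms C2.cyl_axioms, where f=shift2, OF agr_shift2])
lemma meas_shift3: "shift3 \<in> borel_measurable borel"
  by (rule meas_from_agr[OF C3.cyl_axioms C3.cyl_axioms, where f=shift3, OF agr_shift3])
lemma meas_pi12: "pi12 \<in> borel_measurable borel"
  by (rule meas_from_agr[OF C2.cyl_axioms C3.cyl_axioms, where f=pi12, OF agr_pi12])
lemma meas_Nmap: "Nmap \<in> borel_measurable borel"
  by (rule meas_from_agr[OF C1.cyl_axioms C3.cyl_axioms, where f=Nmap, OF agr_Nmap])

lemma Alg_shift2: "S \<in> C2.Alg \<Longrightarrow> shift2 -` S \<in> C2.Alg"
  by (rule Alg_vimage[OF C2.cyl_axioms C2.cyl_axioms, where f=shift2, OF agr_shift2])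
lemma Alg_shift3: "S \<in> C3.Alg \<Longrightarrow> shift3 -` S \<in> C3.Alg"
  by (rule Alg_vimage[OF C3.cyl_axioms C3.cyl_axioms, where f=shift3, OF agr_shift3])
lemma Alg_pi12: "S \<in> C2.Alg \<Longrightarrow> pi12 -` S \<in> C3.Alg"
  by (rule Alg_vimage[OF C2.cyl_axioms C3.cyl_axioms, where f=pi12, OF agr_pi12])
lemma Alg_Nmap: "S \<in> C1.Alg \<Longrightarrow> Nmap -` S \<in> C3.Alg"
  by (rule Alg_vimage[OF C1.cyl_axioms C3.cyl_axioms, where f=Nmap, OF agr_Nmap])

lemma cont_shiftn: "continuous_on UNIV (shiftn k)"
  unfolding shiftn_def by (intro continuous_on_coordinatewise_then_product continuous_on_product_coordinates)

lemma shift_image: "shift ` X = shiftn (-1) -` X"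
proof
  show "shift ` X \<subseteq> shiftn (- 1) -` X"
    by (auto simp: shift_def shiftn_shiftn shiftn_0)
  show "shiftn (- 1) -` X \<subseteq> shift ` X"
  proof
    fix z assume "z \<in> shiftn (- 1) -` X"
    moreover have "z = shift (shiftn (-1) z)" by (simp add: shift_def shiftn_shiftn shiftn_0)
    ultimately show "z \<in> shift ` X" by blast
  qed
qed

lemma shiftn_closure_sandwich: "shiftn j ` sandwich w x \<subseteq> sandwich w x"
  unfolding sandwich_def
proof (rule image_closure_subset)
  show "continuous_on (closure {shiftn k y |k y. w \<le> y \<and> y \<le> x}) (shiftn j)"
    using cont_shiftn continuous_on_subset by blast
  show "shiftn j ` {shiftn k y |k y. w \<le> y \<and> y \<le> x} \<subseteq> closure {shiftn k y |k y. w \<le> y \<and> y \<le> x}"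
    using closure_subset by (fastforce simp: shiftn_shiftn)
qed simp

lemma subshift_sandwich: "subshift (sandwich w x)"
  unfolding subshift_def
proof
  show "closed (sandwich w x)" unfolding sandwich_def by simp
  show "shift ` sandwich w x = sandwich w x"
    unfolding shift_image
  proof
    show "shiftn (- 1) -` sandwich w x \<subseteq> sandwich w x"
    proof
      fix z assume "z \<in> shiftn (- 1) -` sandwich w x"
      then have "shiftn 1 (shiftn (-1) z) \<in> sandwich w x" using shiftn_closure_sandwich by blast
      then show "z \<in> sandwich w x" by (simp add: shiftn_shiftn shiftn_0)
    qed
    show "sandwich w x \<subseteq> shiftn (- 1) -` sandwich w x" using shiftn_closure_sandwich by blast
  qed
qed

lemma subshift_Inter:
  assumes "\<And>K. K \<in> I \<Longrightarrow> subshift (X K)"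
  shows "subshift (\<Inter>K\<in>I. X K)"
  unfolding subshift_def
proof
  show "closed (\<Inter>K\<in>I. X K)" using assms unfolding subshift_def by blast
  have "shift ` X K = X K" if "K \<in> I" for K using assms[OF that] unfolding subshift_def by blast
  then have "shiftn (-1) -` X K = X K" if "K \<in> I" for K using that shift_image by metis
  then have eq: "\<And>K. K \<in> I \<Longrightarrow> shiftn (-1) -` X K = X K" by blast
  have "shiftn (-1) -` (\<Inter>K\<in>I. X K) = (\<Inter>K\<in>I. shiftn (-1) -` X K)" by auto
  also have "\<dots> = (\<Inter>K\<in>I. X K)" by (rule INF_cong[OF refl]) (simp add: eq)
  finally show "shift ` (\<Inter>K\<in>I. X K) = (\<Inter>K\<in>I. X K)" unfolding shift_image .
qed

lemma sandwich_mono: "w' \<le> w \<Longrightarrow> x \<le> x' \<Longrightarrow> sandwich w x \<subseteq> sandwich w' x'"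
  unfolding sandwich_def by (rule closure_mono) (blast intro: order_trans)

lemma sandwich_borel: "sandwich w x \<in> sets borel"
  unfolding sandwich_def by (rule borel_closed) simp

lemma Nmap_between: "w \<le> x \<Longrightarrow> w \<le> Nmap (w, x, y) \<and> Nmap (w, x, y) \<le> x"
  by (auto simp: Nmap_def le_fun_def)

lemma Nmap_shift: "Nmap (shiftn k u, shiftn k v, y) = shiftn k (Nmap (u, v, shiftn (-k) y))"
  by (simp add: Nmap_def shiftn_def)

lemma Nmap_shift3: "Nmap \<circ> shift3 = shift \<circ> Nmap"
  by (auto simp: Nmap_def shift3_def shift_def shiftn_def fun_eq_iff split: prod.splits)

lemma bool_lim: "(f \<longlongrightarrow> (c::bool)) F \<Longrightarrow> eventually (\<lambda>K. f K = c) F"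
proof -
  assume "(f \<longlongrightarrow> c) F"
  from topological_tendstoD[OF this open_bool[of "{c}"]] show ?thesis by simp
qed



lemma bounded_indicator: "bounded (range (indicator S :: 'a \<Rightarrow> real))"
  by (rule bounded_subset[of "{0,1}"]) (auto simp: indicator_def intro: finite_imp_bounded)

lemma qg_ind:
  fixes T :: "'a::topological_space \<Rightarrow> 'a"
  assumes qg: "quasi_generic T p Ns \<rho>"
    and c: "continuous_on UNIV (indicator S :: 'a \<Rightarrow> real)" and S: "S \<in> sets borel"
  shows "(\<lambda>i. (\<Sum>n<Ns i. indicator S ((T^^n) p)) / real (Ns i)) \<longlonglongrightarrow> measure \<rho> S"
proof -
  have "(\<lambda>i. (\<Sum>n<Ns i. (indicator S :: 'a \<Rightarrow> real) ((T^^n) p)) / real (Ns i)) \<longlonglongrightarrow> integral\<^sup>L \<rho> (indicator S)"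
    using qg c bounded_indicator unfolding quasi_generic_def by blast
  moreover have "space \<rho> = UNIV" using qg unfolding quasi_generic_def
    by (metis sets_eq_imp_space_eq space_borel)
  ultimately show ?thesis by simp
qed

lemma qg_zero:
  fixes T :: "'a::topological_space \<Rightarrow> 'a"
  assumes qg: "quasi_generic T p Ns \<rho>"
    and c: "continuous_on UNIV (indicator S :: 'a \<Rightarrow> real)" and S: "S \<in> sets borel"
    and no: "\<And>n. (T^^n) p \<notin> S"
  shows "measure \<rho> S = 0"
proof -
  have "(\<lambda>i. (\<Sum>n<Ns i. indicator S ((T^^n) p)) / real (Ns i)) = (\<lambda>i. 0::real)"
    using no by simp
  then have "(\<lambda>i. 0::real) \<longlonglongrightarrow> measure \<rho> S" using qg_ind[OF qg c S] by simp
  then show ?thesis using LIMSEQ_unique[OF tendsto_const] by metis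
qed

lemma inv_Ns: "strict_mono Ns \<Longrightarrow> (\<lambda>i. inverse (real (Ns i))) \<longlonglongrightarrow> 0"
  using LIMSEQ_subseq_LIMSEQ[OF lim_inverse_n, of Ns] by (simp add: o_def)

lemma qg_inv:
  fixes T :: "'a::topological_space \<Rightarrow> 'a"
  assumes qg: "quasi_generic T p Ns \<rho>" and Ns: "strict_mono Ns"
    and c: "continuous_on UNIV (indicator S :: 'a \<Rightarrow> real)" and S: "S \<in> sets borel"
    and c': "continuous_on UNIV (indicator (T -` S) :: 'a \<Rightarrow> real)" and S': "T -` S \<in> sets borel"
  shows "measure \<rho> (T -` S) = measure \<rho> S"
proof -
  define f where "f n = (indicator S ((T^^n) p) :: real)" for n
  define a where "a i = (\<Sum>n<Ns i. indicator (T -` S) ((T^^n) p)) / real (Ns i)" for i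
  define b where "b i = (\<Sum>n<Ns i. indicator S ((T^^n) p)) / real (Ns i)" for i
  have a: "a \<longlonglongrightarrow> measure \<rho> (T -` S)" unfolding a_def by (rule qg_ind[OF qg c' S'])
  have b: "b \<longlonglongrightarrow> measure \<rho> S" unfolding b_def by (rule qg_ind[OF qg c S])
  have ab: "a i - b i = (f (Ns i) - f 0) / real (Ns i)" for i
  proof -
    have "a i - b i = (\<Sum>n<Ns i. f (Suc n) - f n) / real (Ns i)"
      unfolding a_def b_def f_def by (simp add: indicator_vimage sum_subtractf diff_divide_distrib)
    then show ?thesis by (simp add: sum_lessThan_telescope)
  qed
  have "(\<lambda>i. a i - b i) \<longlonglongrightarrow> 0"
  proof (rule Lim_null_comparison)
    show "(\<lambda>i. inverse (real (Ns i))) \<longlonglongrightarrow> 0" by (rule inv_Ns[OF Ns])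
    have "norm (a i - b i) \<le> inverse (real (Ns i))" for i
    proof -
      have "\<bar>f (Ns i) - f 0\<bar> \<le> 1" unfolding f_def by (simp add: indicator_def)
      then have "\<bar>f (Ns i) - f 0\<bar> / real (Ns i) \<le> 1 / real (Ns i)"
        by (simp add: divide_right_mono)
      then show ?thesis unfolding ab by (simp add: divide_inverse abs_mult)
    qed
    then show "eventually (\<lambda>i. norm (a i - b i) \<le> inverse (real (Ns i))) sequentially" by simp
  qed
  moreover have "(\<lambda>i. a i - b i) \<longlonglongrightarrow> measure \<rho> (T -` S) - measure \<rho> S"
    by (rule tendsto_diff[OF a b])
  ultimately show ?thesis using LIMSEQ_unique by fastforce
qed

lemma C2_ind: "S \<in> C2.Alg \<Longrightarrow> continuous_on UNIV (indicator S :: pt \<times> pt \<Rightarrow> real)"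
  by (rule C2.ind_cont)

lemma rho_shift_inv:
  assumes "quasi_generic shift2 p Ns \<rho>" "strict_mono Ns" "S \<in> C2.Alg"
  shows "measure \<rho> (shift2 -` S) = measure \<rho> S"
  using assms Alg_shift2 C2.ind_cont C2.Alg_borel by (intro qg_inv) auto

lemma prob_meas:
  assumes "prob_space M" "sets M = sets borel"
  shows "emeasure M S = ennreal (measure M S)"
  using assms(1) by (simp add: finite_measure.emeasure_eq_measure prob_space.finite_measure)

lemma space_borel_sets: "sets M = sets borel \<Longrightarrow> space M = UNIV"
  by (metis sets_eq_imp_space_eq space_borel)

lemma rho_inv_prob:
  assumes qg: "quasi_generic shift2 p Ns \<rho>" and Ns: "strict_mono Ns"
  shows "inv_prob shift2 \<rho>"
proof -
  have sr: "sets \<rho> = sets borel" and pr: "prob_space \<rho>" using qg unfolding quasi_generic_def by auto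
  have m: "shift2 \<in> measurable \<rho> borel" by (subst measurable_cong_sets[OF sr refl]) (rule meas_shift2)
  have "distr \<rho> borel shift2 = \<rho>"
  proof (rule C2.measure_unique)
    show "sets (distr \<rho> borel shift2) = sets borel" by simp
    show "sets \<rho> = sets borel" by (rule sr)
    show "finite_measure (distr \<rho> borel shift2)"
      using prob_space.prob_space_distr[OF pr m] prob_space.finite_measure by blast
    fix S assume S: "S \<in> C2.Alg"
    have "emeasure (distr \<rho> borel shift2) S = emeasure \<rho> (shift2 -` S)"
      using emeasure_distr[OF m C2.Alg_borel[OF S]] space_borel_sets[OF sr] by simp
    also have "\<dots> = emeasure \<rho> S"
      using rho_shift_inv[OF qg Ns S] prob_meas[OF pr sr] by simp
    finally show "emeasure (distr \<rho> borel shift2) S = emeasure \<rho> S" .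
  qed
  then show ?thesis unfolding inv_prob_def using sr pr by simp
qed

definition Gt :: "int \<Rightarrow> (pt \<times> pt) set" where "Gt t = {(u, v). \<not> u t \<and> v t}"

lemma Gt_Alg: "Gt t \<in> C2.Alg"
proof -
  have "C2.det (nat \<bar>t\<bar>) (Gt t)"
    unfolding C2.det_def agr2_def agr1_def Gt_def by auto
  then show ?thesis unfolding C2.Alg_def by blast
qed

lemma Gt_shift: "shift2 -` Gt t = Gt (t + 1)"
  by (auto simp: Gt_def shift2_def shift_def shiftn_def add.commute)

lemma Gt_const:
  assumes qg: "quasi_generic shift2 p Ns \<rho>" and Ns: "strict_mono Ns"
  shows "measure \<rho> (Gt t) = measure \<rho> (Gt 0)"
proof -
  have step: "measure \<rho> (Gt (i + 1)) = measure \<rho> (Gt i)" for i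
    using rho_shift_inv[OF qg Ns Gt_Alg[of i]] by (simp add: Gt_shift)
  show ?thesis
  proof (induction t rule: int_induct[where k=0])
    case base then show ?case by simp
  next
    case (step1 i) then show ?case using step[of i] by simp
  next
    case (step2 i) then show ?case using step[of "i - 1"] by simp
  qed
qed

definition Bad :: "int \<Rightarrow> (pt \<times> pt) set" where "Bad j = {(u, v). u j \<and> \<not> v j}"

lemma Bad_Alg: "Bad t \<in> C2.Alg"
proof -
  have "C2.det (nat \<bar>t\<bar>) (Bad t)"
    unfolding C2.det_def agr2_def agr1_def Bad_def by auto
  then show ?thesis unfolding C2.Alg_def by blast
qed

lemma le_set_eq: "{(u, v). u \<le> v} = (\<Inter>j. - Bad j)"
  by (auto simp: Bad_def le_fun_def)

lemma le_set_borel: "{(u::pt, v::pt). u \<le> v} \<in> sets borel"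
proof -
  have "closed (- Bad j)" for j using C2.Alg_closed[OF C2.Alg_compl[OF Bad_Alg]] .
  then have "closed (\<Inter>j. - Bad j)" by blast
  then show ?thesis unfolding le_set_eq by (rule borel_closed)
qed

lemma rho_le:
  assumes qg: "quasi_generic shift2 (w, x) Ns \<rho>" and wx: "w \<le> x"
  shows "emeasure \<rho> {(u, v). u \<le> v} = 1"
proof -
  have sr: "sets \<rho> = sets borel" and pr: "prob_space \<rho>" using qg unfolding quasi_generic_def by auto
  have "measure \<rho> (Bad j) = 0" for j
  proof (rule qg_zero[OF qg C2.ind_cont[OF Bad_Alg] C2.Alg_borel[OF Bad_Alg]])
    fix n
    show "(shift2 ^^ n) (w, x) \<notin> Bad j"
      using wx by (auto simp: shift2_pow Bad_def shiftn_def le_fun_def)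
  qed
  then have "Bad j \<in> null_sets \<rho>" for j
    using prob_meas[OF pr sr, of "Bad j"] C2.Alg_borel[OF Bad_Alg] sr by (simp add: null_sets_def)
  then have "AE z in \<rho>. z \<notin> Bad j" for j by (rule AE_not_in)
  then have "AE z in \<rho>. \<forall>j. z \<notin> Bad j" by (simp add: AE_all_countable)
  then have "AE z in \<rho>. z \<in> {(u, v). u \<le> v}" unfolding le_set_eq by simp
  then show ?thesis using prob_space.emeasure_eq_1_AE[OF pr] le_set_borel sr by simp
qed



lemma pw_bound:
  fixes u' u v v' :: pt
  assumes le: "u' \<le> u" "v \<le> v'" "u \<le> v" and det: "C2.det n S"
  shows "\<bar>indicator S (u', v') - indicator S (u, v) :: real\<bar>
    \<le> (\<Sum>t\<in>{j. \<bar>j\<bar> \<le> int n}. indicator (Gt t) (u', v') - indicator (Gt t) (u, v))"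
proof -
  have nn: "0 \<le> indicator (Gt t) (u', v') - (indicator (Gt t) (u, v) :: real)" for t
  proof -
    have "u' t \<le> u t" "v t \<le> v' t" using le by (simp_all add: le_fun_def)
    then show ?thesis by (auto simp: Gt_def indicator_def)
  qed
  show ?thesis
  proof (cases "agr2 n (u', v') (u, v)")
    case True
    then have "(u', v') \<in> S \<longleftrightarrow> (u, v) \<in> S" using det unfolding C2.det_def by blast
    then have "indicator S (u', v') = (indicator S (u, v) :: real)" by (simp add: indicator_def)
    then show ?thesis using sum_nonneg[of "{j. \<bar>j\<bar> \<le> int n}", OF nn] by simp
  next
    case False
    then obtain t where t: "\<bar>t\<bar> \<le> int n" "u' t \<noteq> u t \<or> v' t \<noteq> v t"
      unfolding agr2_def agr1_def by auto
    have "u' t \<le> u t" "v t \<le> v' t" "u t \<le> v t" using le by (simp_all add: le_fun_def)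
    then have "(u', v') \<in> Gt t" "(u, v) \<notin> Gt t" using t(2) by (auto simp: Gt_def)
    then have "indicator (Gt t) (u', v') - indicator (Gt t) (u, v) = (1::real)" by simp
    moreover have "indicator (Gt t) (u', v') - indicator (Gt t) (u, v)
        \<le> (\<Sum>t\<in>{j. \<bar>j\<bar> \<le> int n}. indicator (Gt t) (u', v') - (indicator (Gt t) (u, v) :: real))"
      by (rule member_le_sum) (use t(1) nn finite_window in auto)
    moreover have "\<bar>indicator S (u', v') - indicator S (u, v) :: real\<bar> \<le> 1"
      by (simp add: indicator_def)
    ultimately show ?thesis by linarith
  qed
qed

lemma shiftn_mono: "a \<le> b \<Longrightarrow> shiftn k a \<le> shiftn k b"
  by (simp add: le_fun_def shiftn_def)

lemma avg_bound:
  assumes le: "w' \<le> w" "x \<le> x'" "w \<le> x" and det: "C2.det n S"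
  shows "\<bar>(\<Sum>j<N. indicator S ((shift2^^j) (w', x'))) / real N
          - (\<Sum>j<N. indicator S ((shift2^^j) (w, x))) / real N :: real\<bar>
    \<le> (\<Sum>t\<in>{j. \<bar>j\<bar> \<le> int n}. (\<Sum>j<N. indicator (Gt t) ((shift2^^j) (w', x'))) / real N
          - (\<Sum>j<N. indicator (Gt t) ((shift2^^j) (w, x))) / real N)"
proof -
  define W where "W = {j::int. \<bar>j\<bar> \<le> int n}"
  define d where "d j = (indicator S ((shift2^^j) (w', x')) - indicator S ((shift2^^j) (w, x)) :: real)" for j
  define c where "c t j = (indicator (Gt t) ((shift2^^j) (w', x')) - indicator (Gt t) ((shift2^^j) (w, x)) :: real)" for t j
  have pw: "\<bar>d j\<bar> \<le> (\<Sum>t\<in>W. c t j)" for j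
    unfolding d_def c_def W_def shift2_pow
    by (simp, rule pw_bound[OF shiftn_mono[OF le(1)] shiftn_mono[OF le(2)] shiftn_mono[OF le(3)] det])
  have "\<bar>(\<Sum>j<N. indicator S ((shift2^^j) (w', x'))) / real N
          - (\<Sum>j<N. indicator S ((shift2^^j) (w, x))) / real N :: real\<bar> = \<bar>\<Sum>j<N. d j\<bar> / real N"
    unfolding d_def by (simp add: sum_subtractf diff_divide_distrib[symmetric])
  also have "\<dots> \<le> (\<Sum>j<N. \<bar>d j\<bar>) / real N"
    by (rule divide_right_mono) (simp_all add: sum_abs)
  also have "\<dots> \<le> (\<Sum>j<N. \<Sum>t\<in>W. c t j) / real N"
    by (rule divide_right_mono) (simp_all add: sum_mono pw)
  also have "\<dots> = (\<Sum>t\<in>W. \<Sum>j<N. c t j) / real N"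
    by (simp add: sum.swap[of _ W])
  also have "\<dots> = (\<Sum>t\<in>W. (\<Sum>j<N. c t j) / real N)"
    by (simp add: sum_divide_distrib)
  also have "\<dots> = (\<Sum>t\<in>W. (\<Sum>j<N. indicator (Gt t) ((shift2^^j) (w', x'))) / real N
          - (\<Sum>j<N. indicator (Gt t) ((shift2^^j) (w, x))) / real N)"
    unfolding c_def by (simp add: sum_subtractf diff_divide_distrib)
  finally show ?thesis unfolding W_def .
qed

lemma cyl_conv:
  fixes w x :: "nat \<Rightarrow> pt" and \<rho> :: "nat \<Rightarrow> (pt \<times> pt) measure"
  assumes wle: "\<And>K. K \<ge> 1 \<Longrightarrow> w K \<le> winf" and xle: "\<And>K. K \<ge> 1 \<Longrightarrow> xinf \<le> x K"
    and wx: "winf \<le> xinf" and Ns: "strict_mono Ns"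
    and qg: "\<And>K. K \<ge> 1 \<Longrightarrow> quasi_generic shift2 (w K, x K) Ns (\<rho> K)"
    and qg_inf: "quasi_generic shift2 (winf, xinf) Ns \<rho>inf"
    and cyl: "(\<lambda>K. measure (\<rho> K) {(u, v). \<not> u 0 \<and> v 0}) \<longlonglongrightarrow> measure \<rho>inf {(u, v). \<not> u 0 \<and> v 0}"
    and S: "S \<in> C2.Alg"
  shows "(\<lambda>K. measure (\<rho> K) S) \<longlonglongrightarrow> measure \<rho>inf S"
proof -
  obtain n where det: "C2.det n S" using S unfolding C2.Alg_def by auto
  define W where "W = {j::int. \<bar>j\<bar> \<le> int n}"
  have G0: "Gt 0 = {(u, v). \<not> u 0 \<and> v 0}" by (simp add: Gt_def)
  have bound: "\<bar>measure (\<rho> K) S - measure \<rho>inf S\<bar>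
      \<le> real (card W) * (measure (\<rho> K) (Gt 0) - measure \<rho>inf (Gt 0))" if K: "K \<ge> 1" for K
  proof -
    define A where "A B i = (\<Sum>j<Ns i. indicator B ((shift2^^j) (w K, x K))) / real (Ns i)" for B i
    define A' where "A' B i = (\<Sum>j<Ns i. indicator B ((shift2^^j) (winf, xinf))) / real (Ns i)" for B i
    have lA: "A B \<longlonglongrightarrow> measure (\<rho> K) B" if "B \<in> C2.Alg" for B
      unfolding A_def by (rule qg_ind[OF qg[OF K] C2.ind_cont[OF that] C2.Alg_borel[OF that]])
    have lA': "A' B \<longlonglongrightarrow> measure \<rho>inf B" if "B \<in> C2.Alg" for B
      unfolding A'_def by (rule qg_ind[OF qg_inf C2.ind_cont[OF that] C2.Alg_borel[OF that]])
    have l1: "(\<lambda>i. \<bar>A S i - A' S i\<bar>) \<longlonglongrightarrow> \<bar>measure (\<rho> K) S - measure \<rho>inf S\<bar>"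
      by (intro tendsto_intros lA lA' S)
    have l2: "(\<lambda>i. \<Sum>t\<in>W. A (Gt t) i - A' (Gt t) i)
        \<longlonglongrightarrow> (\<Sum>t\<in>W. measure (\<rho> K) (Gt t) - measure \<rho>inf (Gt t))"
      by (intro tendsto_intros lA lA' Gt_Alg)
    have "\<forall>i. \<bar>A S i - A' S i\<bar> \<le> (\<Sum>t\<in>W. A (Gt t) i - A' (Gt t) i)"
      unfolding A_def A'_def W_def using avg_bound[OF wle[OF K] xle[OF K] wx det] by blast
    then have "\<bar>measure (\<rho> K) S - measure \<rho>inf S\<bar> \<le> (\<Sum>t\<in>W. measure (\<rho> K) (Gt t) - measure \<rho>inf (Gt t))"
      using LIMSEQ_le[OF l1 l2] by blast
    also have "\<dots> = (\<Sum>t\<in>W. measure (\<rho> K) (Gt 0) - measure \<rho>inf (Gt 0))"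
      by (intro sum.cong refl arg_cong2[where f="(-)"] Gt_const[OF qg[OF K] Ns] Gt_const[OF qg_inf Ns])
    also have "\<dots> = real (card W) * (measure (\<rho> K) (Gt 0) - measure \<rho>inf (Gt 0))"
      by simp
    finally show ?thesis .
  qed
  have "(\<lambda>K. measure (\<rho> K) S - measure \<rho>inf S) \<longlonglongrightarrow> 0"
  proof (rule Lim_null_comparison)
    show "eventually (\<lambda>K. norm (measure (\<rho> K) S - measure \<rho>inf S)
        \<le> real (card W) * (measure (\<rho> K) (Gt 0) - measure \<rho>inf (Gt 0))) sequentially"
      unfolding eventually_sequentially using bound by (intro exI[of _ 1]) auto
    have "(\<lambda>K. measure (\<rho> K) (Gt 0) - measure \<rho>inf (Gt 0)) \<longlonglongrightarrow> 0"
      using cyl unfolding G0 by (rule LIM_zero)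
    then have "(\<lambda>K. real (card W) * (measure (\<rho> K) (Gt 0) - measure \<rho>inf (Gt 0))) \<longlonglongrightarrow> real (card W) * 0"
      by (intro tendsto_mult tendsto_const)
    then show "(\<lambda>K. real (card W) * (measure (\<rho> K) (Gt 0) - measure \<rho>inf (Gt 0))) \<longlonglongrightarrow> 0" by simp
  qed
  then show ?thesis by (rule LIM_zero_cancel)
qed



lemma meas_borel_cong: "sets M = sets borel \<Longrightarrow> f \<in> measurable borel N \<Longrightarrow> f \<in> measurable M N"
  by (subst measurable_cong_sets[of M borel N N]) auto

lemma (in cyl) open_decomp:
  assumes "open U"
  shows "\<exists>V. (\<forall>n. det n (V n)) \<and> (\<Union>n. V n) = U"
proof -
  define V where "V n = {a. {b. agr n a b} \<subseteq> U}" for n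
  have "det n (V n)" for n
    unfolding det_def V_def using agr_sym agr_trans by blast
  moreover have "(\<Union>n. V n) = U"
  proof
    show "(\<Union>n. V n) \<subseteq> U" unfolding V_def using agr_refl by blast
    show "U \<subseteq> (\<Union>n. V n)" unfolding V_def using agr_nbhd[OF assms] by blast
  qed
  ultimately show ?thesis by blast
qed

lemma (in cyl) distr_eq_via_Alg:
  fixes M :: "'b::topological_space measure" and f :: "'b \<Rightarrow> 'a"
  assumes M: "prob_space M" "sets M = sets borel" and f: "f \<in> measurable borel borel"
    and N: "prob_space N" "sets N = sets borel"
    and eq: "\<And>S. S \<in> Alg \<Longrightarrow> measure M (f -` S) = measure N S"
  shows "distr M borel f = N"
proof (rule measure_unique)
  have fM: "f \<in> measurable M borel" by (rule meas_borel_cong[OF M(2) f])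
  show "sets (distr M borel f) = sets borel" by simp
  show "sets N = sets borel" by (rule N(2))
  show "finite_measure (distr M borel f)"
    using prob_space.prob_space_distr[OF M(1) fM] prob_space.finite_measure by blast
  fix S assume S: "S \<in> Alg"
  have "emeasure (distr M borel f) S = emeasure M (f -` S)"
    using emeasure_distr[OF fM Alg_borel[OF S]] space_borel_sets[OF M(2)] by simp
  also have "\<dots> = ennreal (measure M (f -` S))" by (rule prob_meas[OF M])
  also have "\<dots> = ennreal (measure N S)" using eq[OF S] by simp
  also have "\<dots> = emeasure N S" using prob_meas[OF N] by simp
  finally show "emeasure (distr M borel f) S = emeasure N S" .
qed

lemma lim_order:
  fixes w x :: "nat \<Rightarrow> pt"
  assumes le: "\<And>K. K \<ge> 1 \<Longrightarrow> w K \<le> x K"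
    and w_mono: "\<And>K L. 1 \<le> K \<Longrightarrow> K \<le> L \<Longrightarrow> w K \<le> w L"
    and x_anti: "\<And>K L. 1 \<le> K \<Longrightarrow> K \<le> L \<Longrightarrow> x L \<le> x K"
    and w_lim: "\<And>n. (\<lambda>K. w K n) \<longlonglongrightarrow> winf n"
    and x_lim: "\<And>n. (\<lambda>K. x K n) \<longlonglongrightarrow> xinf n"
  shows "\<And>K. K \<ge> 1 \<Longrightarrow> w K \<le> winf" "\<And>K. K \<ge> 1 \<Longrightarrow> xinf \<le> x K" "winf \<le> xinf"
proof -
  have ew: "\<exists>L0. \<forall>L\<ge>L0. w L n = winf n" for n
    using bool_lim[OF w_lim[of n]] unfolding eventually_sequentially .
  have ex: "\<exists>L0. \<forall>L\<ge>L0. x L n = xinf n" for n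
    using bool_lim[OF x_lim[of n]] unfolding eventually_sequentially .
  show "w K \<le> winf" if K: "K \<ge> 1" for K
  proof (rule le_funI)
    fix n
    obtain L0 where L0: "\<forall>L\<ge>L0. w L n = winf n" using ew by blast
    have "w K n \<le> w (max K L0) n" using w_mono[OF K, of "max K L0"] by (simp add: le_fun_def)
    then show "w K n \<le> winf n" using L0 by simp
  qed
  show "xinf \<le> x K" if K: "K \<ge> 1" for K
  proof (rule le_funI)
    fix n
    obtain L0 where L0: "\<forall>L\<ge>L0. x L n = xinf n" using ex by blast
    have "x (max K L0) n \<le> x K n" using x_anti[OF K, of "max K L0"] by (simp add: le_fun_def)
    then show "xinf n \<le> x K n" using L0 by simp
  qed
  show "winf \<le> xinf"
  proof (rule le_funI)
    fix n
    obtain L0 where L0: "\<forall>L\<ge>L0. w L n = winf n" using ew by blast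
    obtain L1 where L1: "\<forall>L\<ge>L1. x L n = xinf n" using ex by blast
    define L where "L = max 1 (max L0 L1)"
    have "w L n \<le> x L n" using le[of L] unfolding L_def by (simp add: le_fun_def)
    then show "winf n \<le> xinf n" using L0 L1 unfolding L_def by simp
  qed
qed

lemma D_det:
  assumes "C1.det n V"
  shows "C2.det n {(u, v). \<exists>y. Nmap (u, v, y) \<in> V}"
  unfolding C2.det_def
proof (intro allI impI)
  fix a b assume ab: "agr2 n a b"
  obtain a1 a2 where a: "a = (a1, a2)" by (cases a)
  obtain b1 b2 where b: "b = (b1, b2)" by (cases b)
  have "V = V" ..
  have "agr1 n (Nmap (a1, a2, y)) (Nmap (b1, b2, y))" for y
  proof -
    have "agr3 (n + 0) (a1, a2, y) (b1, b2, y)"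
      using ab C1.agr_refl[of n y] unfolding a b agr3_def agr2_def by simp
    then show ?thesis using agr_Nmap by blast
  qed
  then have "Nmap (a1, a2, y) \<in> V \<longleftrightarrow> Nmap (b1, b2, y) \<in> V" for y
    using assms unfolding C1.det_def by blast
  then show "a \<in> {(u, v). \<exists>y. Nmap (u, v, y) \<in> V} \<longleftrightarrow> b \<in> {(u, v). \<exists>y. Nmap (u, v, y) \<in> V}"
    unfolding a b by simp
qed

lemma Nmap_sub: "{t. Nmap t \<in> V} \<subseteq> pi12 -` {(u, v). \<exists>y. Nmap (u, v, y) \<in> V}"
  by (auto simp: pi12_def split: prod.splits)

lemma push_in:
  assumes qg_inf: "quasi_generic shift2 (winf, xinf) Ns \<rho>inf" and wx: "winf \<le> xinf"
    and lam: "inv_prob shift3 lam" "distr lam borel pi12 = \<rho>inf"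
  shows "distr lam borel Nmap \<in> Minv (sandwich winf xinf)"
proof -
  have sl: "sets lam = sets borel" and pl: "prob_space lam" and il: "distr lam borel shift3 = lam"
    using lam(1) unfolding inv_prob_def by blast+
  have spl: "space lam = UNIV" by (rule space_borel_sets[OF sl])
  have mN: "Nmap \<in> measurable lam borel" by (rule meas_borel_cong[OF sl meas_Nmap])
  have m3: "shift3 \<in> measurable lam borel" by (rule meas_borel_cong[OF sl meas_shift3])
  have mp: "pi12 \<in> measurable lam borel" by (rule meas_borel_cong[OF sl meas_pi12])
  define \<mu> where "\<mu> = distr lam borel Nmap"
  have p\<mu>: "prob_space \<mu>" unfolding \<mu>_def by (rule prob_space.prob_space_distr[OF pl mN])
  have s\<mu>: "sets \<mu> = sets borel" unfolding \<mu>_def by simp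
  have "distr \<mu> borel shift = distr lam borel (shift \<circ> Nmap)"
    unfolding \<mu>_def by (rule distr_distr[OF meas_shift mN])
  also have "\<dots> = distr lam borel (Nmap \<circ> shift3)" by (simp add: Nmap_shift3)
  also have "\<dots> = distr (distr lam borel shift3) borel Nmap"
    by (rule distr_distr[OF meas_Nmap m3, symmetric])
  also have "\<dots> = \<mu>" unfolding il \<mu>_def ..
  finally have inv: "inv_prob shift \<mu>" unfolding inv_prob_def using p\<mu> s\<mu> by simp
  define U where "U = - sandwich winf xinf"
  have "open U" unfolding U_def sandwich_def by (rule open_Compl) simp
  then obtain V where V: "\<And>n. C1.det n (V n)" "(\<Union>n. V n) = U"
    using C1.open_decomp by blast
  have null: "AE t in lam. Nmap t \<notin> V n" for n
  proof -
    define D where "D = {(u, v). \<exists>y. Nmap (u, v, y) \<in> V n}"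
    have "C2.det n D" unfolding D_def by (rule D_det[OF V(1)])
    then have DA: "D \<in> C2.Alg" unfolding C2.Alg_def by blast
    have "measure \<rho>inf D = 0"
    proof (rule qg_zero[OF qg_inf C2.ind_cont[OF DA] C2.Alg_borel[OF DA]])
      fix k
      show "(shift2 ^^ k) (winf, xinf) \<notin> D"
      proof
        assume "(shift2 ^^ k) (winf, xinf) \<in> D"
        then obtain y where y: "Nmap (shiftn (int k) winf, shiftn (int k) xinf, y) \<in> V n"
          unfolding D_def shift2_pow by auto
        have "Nmap (shiftn (int k) winf, shiftn (int k) xinf, y)
            = shiftn (int k) (Nmap (winf, xinf, shiftn (- int k) y))" by (rule Nmap_shift)
        also have "\<dots> \<in> sandwich winf xinf"
        proof -
          define z where "z = Nmap (winf, xinf, shiftn (- int k) y)"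
          have "winf \<le> z \<and> z \<le> xinf" unfolding z_def by (rule Nmap_between[OF wx])
          then have "shiftn (int k) z \<in> {shiftn k y |k y. winf \<le> y \<and> y \<le> xinf}"
            by (intro CollectI exI[of _ "int k"] exI[of _ z]) simp
          then have "shiftn (int k) z \<in> sandwich winf xinf"
            unfolding sandwich_def by (rule subsetD[OF closure_subset])
          then show "shiftn (int k) (Nmap (winf, xinf, shiftn (- int k) y)) \<in> sandwich winf xinf"
            unfolding z_def .
        qed
        finally have "Nmap (shiftn (int k) winf, shiftn (int k) xinf, y) \<in> sandwich winf xinf" .
        moreover have "V n \<subseteq> U" using V(2) by blast
        ultimately show False using y unfolding U_def by blast
      qed
    qed
    then have "emeasure \<rho>inf D = 0"
      using prob_meas[of \<rho>inf D] qg_inf unfolding quasi_generic_def by simp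
    then have "emeasure lam (pi12 -` D) = 0"
      using emeasure_distr[OF mp C2.Alg_borel[OF DA]] lam(2) spl by simp
    moreover have "pi12 -` D \<in> sets lam" using measurable_sets[OF mp C2.Alg_borel[OF DA]] spl by simp
    ultimately have "pi12 -` D \<in> null_sets lam" by (simp add: null_sets_def)
    moreover have "{t \<in> space lam. \<not> Nmap t \<notin> V n} \<subseteq> pi12 -` D"
    proof -
      have "{t \<in> space lam. \<not> Nmap t \<notin> V n} \<subseteq> {t. Nmap t \<in> V n}" by blast
      also have "\<dots> \<subseteq> pi12 -` D" unfolding D_def by (rule Nmap_sub)
      finally show ?thesis .
    qed
    ultimately show ?thesis by (rule AE_I')
  qed
  then have AEn: "AE t in lam. \<forall>n. Nmap t \<notin> V n" by (simp add: AE_all_countable)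
  have imp: "(\<forall>n. Nmap t \<notin> V n) \<longrightarrow> t \<in> Nmap -` sandwich winf xinf" for t
    using V(2) unfolding U_def by blast
  have "AE t in lam. t \<in> Nmap -` sandwich winf xinf"
    by (rule AE_mp[OF AEn AE_I2]) (rule imp)
  then have "emeasure lam (Nmap -` sandwich winf xinf) = 1"
    using prob_space.emeasure_eq_1_AE[OF pl] measurable_sets[OF mN sandwich_borel] spl by simp
  then have "emeasure \<mu> (sandwich winf xinf) = 1"
    unfolding \<mu>_def using emeasure_distr[OF mN sandwich_borel] spl by simp
  then show ?thesis unfolding Minv_def \<mu>_def[symmetric] using inv by simp
qed



lemma inv_probD:
  assumes "inv_prob T lam"
  shows "sets lam = sets borel" "prob_space lam" "distr lam borel T = lam"
  using assms unfolding inv_prob_def by blast+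

lemma meas_pres:
  assumes "inv_prob T lam" "T \<in> measurable borel borel" "S \<in> sets borel"
  shows "measure lam (T -` S) = measure lam S"
proof -
  have sl: "sets lam = sets borel" using inv_probD[OF assms(1)] by blast
  have "measure (distr lam borel T) S = measure lam (T -` S \<inter> space lam)"
    by (rule measure_distr[OF meas_borel_cong[OF sl assms(2)] assms(3)])
  then show ?thesis using inv_probD(3)[OF assms(1)] space_borel_sets[OF sl] by simp
qed

lemma meas_marg:
  assumes "sets lam = sets borel" "f \<in> measurable borel borel" "S \<in> sets borel"
  shows "measure lam (f -` S) = measure (distr lam borel f) S"
  using measure_distr[OF meas_borel_cong[OF assms(1,2)] assms(3)] space_borel_sets[OF assms(1)] by simp

lemma pull_back:
  fixes w x :: "nat \<Rightarrow> pt" and \<rho> :: "nat \<Rightarrow> (pt \<times> pt) measure"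
  assumes wle: "\<And>K. K \<ge> 1 \<Longrightarrow> w K \<le> winf" and xle: "\<And>K. K \<ge> 1 \<Longrightarrow> xinf \<le> x K"
    and wx: "winf \<le> xinf" and Ns: "strict_mono Ns"
    and qg: "\<And>K. K \<ge> 1 \<Longrightarrow> quasi_generic shift2 (w K, x K) Ns (\<rho> K)"
    and qg_inf: "quasi_generic shift2 (winf, xinf) Ns \<rho>inf"
    and cyl: "(\<lambda>K. measure (\<rho> K) {(u, v). \<not> u 0 \<and> v 0}) \<longlonglongrightarrow> measure \<rho>inf {(u, v). \<not> u 0 \<and> v 0}"
    and lamK: "\<And>K. K \<ge> 1 \<Longrightarrow> \<exists>lam. \<mu> = distr lam borel Nmap \<and> inv_prob shift3 lam \<and> distr lam borel pi12 = \<rho> K"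
    and \<mu>: "inv_prob shift \<mu>"
  shows "\<exists>lam. \<mu> = distr lam borel Nmap \<and> inv_prob shift3 lam \<and> distr lam borel pi12 = \<rho>inf"
proof -
  have "\<forall>K. \<exists>lam. K \<ge> 1 \<longrightarrow> \<mu> = distr lam borel Nmap \<and> inv_prob shift3 lam \<and> distr lam borel pi12 = \<rho> K"
    using lamK by blast
  then obtain lf where lf: "\<And>K. K \<ge> 1 \<Longrightarrow> \<mu> = distr (lf K) borel Nmap \<and> inv_prob shift3 (lf K) \<and> distr (lf K) borel pi12 = \<rho> K"
    by metis
  define L where "L K = lf (Suc K)" for K
  have LN: "\<mu> = distr (L K) borel Nmap" and Li: "inv_prob shift3 (L K)" and Lp: "distr (L K) borel pi12 = \<rho> (Suc K)" for K
    using lf[of "Suc K"] unfolding L_def by auto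
  have Ls: "sets (L K) = sets borel" and Lpr: "prob_space (L K)" for K using inv_probD[OF Li] by auto
  obtain r M where r: "strict_mono r" and pM: "prob_space M" and sM: "sets M = sets borel"
    and conv: "\<And>S. S \<in> C3.Alg \<Longrightarrow> (\<lambda>K. measure (L (r K)) S) \<longlonglongrightarrow> measure M S"
    using C3.subseq_limit[of L, OF Lpr Ls] by blast
  have "distr M borel shift3 = M"
  proof (rule C3.distr_eq_via_Alg[OF pM sM meas_shift3 pM sM])
    fix S assume S: "S \<in> C3.Alg"
    have "(\<lambda>K. measure (L (r K)) (shift3 -` S)) = (\<lambda>K. measure (L (r K)) S)"
      using meas_pres[OF Li meas_shift3 C3.Alg_borel[OF S]] by simp
    then have "(\<lambda>K. measure (L (r K)) S) \<longlonglongrightarrow> measure M (shift3 -` S)"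
      using conv[OF Alg_shift3[OF S]] by simp
    then show "measure M (shift3 -` S) = measure M S" using LIMSEQ_unique conv[OF S] by blast
  qed
  then have iM: "inv_prob shift3 M" unfolding inv_prob_def using pM sM by simp
  have prinf: "prob_space \<rho>inf" "sets \<rho>inf = sets borel" using qg_inf unfolding quasi_generic_def by auto
  have "distr M borel pi12 = \<rho>inf"
  proof (rule C2.distr_eq_via_Alg[OF pM sM meas_pi12 prinf])
    fix S assume S: "S \<in> C2.Alg"
    have "(\<lambda>K. measure (L (r K)) (pi12 -` S)) = (\<lambda>K. measure (\<rho> (Suc (r K))) S)"
      using meas_marg[OF Ls meas_pi12 C2.Alg_borel[OF S]] Lp by simp
    then have a: "(\<lambda>K. measure (\<rho> (Suc (r K))) S) \<longlonglongrightarrow> measure M (pi12 -` S)"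
      using conv[OF Alg_pi12[OF S]] by simp
    have full: "(\<lambda>K. measure (\<rho> K) S) \<longlonglongrightarrow> measure \<rho>inf S"
      by (rule cyl_conv[OF wle xle wx Ns qg qg_inf cyl S])
    have "strict_mono (\<lambda>K. Suc (r K))" using r by (simp add: strict_mono_def)
    then have "(\<lambda>K. measure (\<rho> (Suc (r K))) S) \<longlonglongrightarrow> measure \<rho>inf S"
      using LIMSEQ_subseq_LIMSEQ[OF full] by (simp add: o_def)
    then show "measure M (pi12 -` S) = measure \<rho>inf S" using LIMSEQ_unique a by blast
  qed
  have pmu: "prob_space \<mu>" "sets \<mu> = sets borel" using inv_probD[OF \<mu>] by auto
  have "distr M borel Nmap = \<mu>"
  proof (rule C1.distr_eq_via_Alg[OF pM sM meas_Nmap pmu])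
    fix S assume S: "S \<in> C1.Alg"
    have "(\<lambda>K. measure (L (r K)) (Nmap -` S)) = (\<lambda>K. measure \<mu> S)"
      using meas_marg[OF Ls meas_Nmap C1.Alg_borel[OF S]] LN by simp
    then have "(\<lambda>K. measure \<mu> S) \<longlonglongrightarrow> measure M (Nmap -` S)"
      using conv[OF Alg_Nmap[OF S]] by simp
    then show "measure M (Nmap -` S) = measure \<mu> S" using LIMSEQ_unique tendsto_const by blast
  qed
  then show ?thesis using iM \<open>distr M borel pi12 = \<rho>inf\<close> by metis
qed



lemma Minv_mono:
  assumes "A \<subseteq> B" "B \<in> sets borel" "\<mu> \<in> Minv A"
  shows "\<mu> \<in> Minv B"
proof -
  have i: "inv_prob shift \<mu>" and e: "emeasure \<mu> A = 1" using assms(3) unfolding Minv_def by auto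
  have s: "sets \<mu> = sets borel" and p: "prob_space \<mu>" using inv_probD[OF i] by auto
  have "emeasure \<mu> A \<le> emeasure \<mu> B" by (rule emeasure_mono[OF assms(1)]) (simp add: s assms(2))
  then have "emeasure \<mu> B = 1" using e prob_space.emeasure_le_1[OF p, of B] by simp
  then show ?thesis unfolding Minv_def using i by simp
qed

theorem proposition4p9:
  fixes w x :: "nat \<Rightarrow> pt" and winf xinf :: pt
    and \<rho> :: "nat \<Rightarrow> (pt \<times> pt) measure" and \<rho>inf :: "(pt \<times> pt) measure"
    and Ns :: "nat \<Rightarrow> nat"
  assumes le: "\<And>K. K \<ge> 1 \<Longrightarrow> w K \<le> x K"
    and w_mono: "\<And>K L. 1 \<le> K \<Longrightarrow> K \<le> L \<Longrightarrow> w K \<le> w L"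
    and x_anti: "\<And>K L. 1 \<le> K \<Longrightarrow> K \<le> L \<Longrightarrow> x L \<le> x K"
    and w_lim: "\<And>n. (\<lambda>K. w K n) \<longlonglongrightarrow> winf n"
    and x_lim: "\<And>n. (\<lambda>K. x K n) \<longlonglongrightarrow> xinf n"
    and Ns_mono: "strict_mono Ns"
    and qg: "\<And>K. K \<ge> 1 \<Longrightarrow> quasi_generic shift2 (w K, x K) Ns (\<rho> K)"
    and qg_inf: "quasi_generic shift2 (winf, xinf) Ns \<rho>inf"
    and cyl: "(\<lambda>K. measure (\<rho> K) {(u, v). \<not> u 0 \<and> v 0}) \<longlonglongrightarrow>
               measure \<rho>inf {(u, v). \<not> u 0 \<and> v 0}"
    and smt: "\<And>K. K \<ge> 1 \<Longrightarrow> smt_subshift_base (sandwich (w K) (x K)) (\<rho> K)"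
  shows "smt_subshift_base (\<Inter>K\<in>{1..}. sandwich (w K) (x K)) \<rho>inf
       \<and> smt_subshift_base (sandwich winf xinf) \<rho>inf"
proof -
  have wle: "\<And>K. K \<ge> 1 \<Longrightarrow> w K \<le> winf" and xle: "\<And>K. K \<ge> 1 \<Longrightarrow> xinf \<le> x K"
    and wx: "winf \<le> xinf"
    using lim_order[OF le w_mono x_anti w_lim x_lim] by blast+
  define X where "X = (\<Inter>K\<in>{1..}. sandwich (w K) (x K))"
  define R where "R = {distr lam borel Nmap | lam. inv_prob shift3 lam \<and> distr lam borel pi12 = \<rho>inf}"
  have subX: "sandwich winf xinf \<subseteq> X" unfolding X_def
    using sandwich_mono[OF wle xle] by auto
  have subK: "X \<subseteq> sandwich (w K) (x K)" if "K \<ge> 1" for K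
    unfolding X_def using that by auto
  have ssX: "subshift X" unfolding X_def by (rule subshift_Inter) (rule subshift_sandwich)
  have Xb: "X \<in> sets borel" using ssX unfolding subshift_def by (simp add: borel_closed)
  have R1: "R \<subseteq> Minv (sandwich winf xinf)"
    unfolding R_def using push_in[OF qg_inf wx] by blast
  have M12: "Minv (sandwich winf xinf) \<subseteq> Minv X"
    using Minv_mono[OF subX Xb] by blast
  have M2R: "Minv X \<subseteq> R"
  proof
    fix \<mu> assume mu: "\<mu> \<in> Minv X"
    have lamK: "\<exists>lam. \<mu> = distr lam borel Nmap \<and> inv_prob shift3 lam \<and> distr lam borel pi12 = \<rho> K"
      if K: "K \<ge> 1" for K
    proof -
      have "\<mu> \<in> Minv (sandwich (w K) (x K))"
        by (rule Minv_mono[OF subK[OF K] sandwich_borel mu])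
      then have "\<mu> \<in> {distr lam borel Nmap | lam. inv_prob shift3 lam \<and> distr lam borel pi12 = \<rho> K}"
        using smt[OF K] unfolding smt_subshift_base_def smt_subshift_def by blast
      then show ?thesis by blast
    qed
    have imu: "inv_prob shift \<mu>" using mu unfolding Minv_def by blast
    have "\<exists>lam. \<mu> = distr lam borel Nmap \<and> inv_prob shift3 lam \<and> distr lam borel pi12 = \<rho>inf"
    proof (rule pull_back[where w=w and x=x and \<rho>=\<rho> and winf=winf and xinf=xinf and Ns=Ns and \<rho>inf=\<rho>inf and \<mu>=\<mu>])
      show "\<And>K. K \<ge> 1 \<Longrightarrow> w K \<le> winf" by (rule wle)
      show "\<And>K. K \<ge> 1 \<Longrightarrow> xinf \<le> x K" by (rule xle)
      show "winf \<le> xinf" by (rule wx)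
      show "strict_mono Ns" by (rule Ns_mono)
      show "\<And>K. K \<ge> 1 \<Longrightarrow> quasi_generic shift2 (w K, x K) Ns (\<rho> K)" by (rule qg)
      show "quasi_generic shift2 (winf, xinf) Ns \<rho>inf" by (rule qg_inf)
      show "(\<lambda>K. measure (\<rho> K) {(u, v). \<not> u 0 \<and> v 0}) \<longlonglongrightarrow> measure \<rho>inf {(u, v). \<not> u 0 \<and> v 0}"
        by (rule cyl)
      show "\<And>K. K \<ge> 1 \<Longrightarrow> \<exists>lam. \<mu> = distr lam borel Nmap \<and> inv_prob shift3 lam \<and> distr lam borel pi12 = \<rho> K"
        by (rule lamK)
      show "inv_prob shift \<mu>" by (rule imu)
    qed
    then show "\<mu> \<in> R" unfolding R_def by blast
  qed
  have eqX: "Minv X = R" using R1 M12 M2R by blast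
  have eqS: "Minv (sandwich winf xinf) = R" using R1 M12 M2R by blast
  have rinv: "inv_prob shift2 \<rho>inf" by (rule rho_inv_prob[OF qg_inf Ns_mono])
  have rle: "emeasure \<rho>inf {(u, v). u \<le> v} = 1" by (rule rho_le[OF qg_inf wx])
  show ?thesis
    unfolding smt_subshift_base_def smt_subshift_def
    using ssX subshift_sandwich[of winf xinf] rinv rle eqX eqS
    unfolding X_def R_def by blast
qed


end
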